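(* For every detector $\hat\theta$, every $p>1$, and every measurable $\zeta_1:\mathcal{X}\to[0,\infty)$ with $0<{\rm E}[\zeta_1(\mathbf{x})]<\infty$ and $0<{\rm E}\big[\zeta_1(\mathbf{x})^{\frac{p}{p-1}}\sum_{i=1}^M P(\theta_i|\mathbf{x})^{\frac{1}{1-p}}\big]<\infty$, $$P_e\geq (M-1)^p\,{\rm E}^p\big[\zeta_1(\mathbf{x})\big]\;{\rm E}^{1-p}\Big[\zeta_1(\mathbf{x})^{\frac{p}{p-1}}\sum_{i=1}^M P(\theta_i|\mathbf{x})^{\frac{1}{1-p}}\Big].$$
   Context: $M$-ary hypothesis testing: the true hypothesis $\theta$ is a random variable with values in $\{\theta_1,\ldots,\theta_M\}$, $\mathbf{x}$ is a random observation in a measurable space $\mathcal{X}$, and $P(\theta_i|\mathbf{x})$ is the posterior probability of $\theta_i$ given $\mathbf{x}$, assumed to satisfy $P(\theta_i|\mathbf{x})>0$ for all $\mathbf{x}$, $i$. A detector is a measurable map $\hat\theta:\mathcal{X}\to\{\theta_1,\ldots,\theta_M\}$, and its probability of error is $P_e=\Pr(\hat\theta(\mathbf{x})\neq\theta)$. ${\rm E}^a[Y]$ denotes $({\rm E}[Y])^a$. *)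

theory Defs
  imports "HOL-Probability.Probability"
begin

end

theory Submission
  imports Defs
begin

lemma young_c:
  fixes z a c p q :: real
  assumes z: "z \<ge> 0" and a: "a > 0" and c: "c > 0" and p: "p > 1" and q: "q = p/(p-1)"
  shows "z \<le> c*a/p + c powr (-q/p) * (z powr q * a powr (1/(1-p))) / q"
proof (cases "z = 0")
  case True
  have "q > 0" using p q by simp
  then show ?thesis using True c a p by (simp add: )
next
  case False
  hence zp: "z > 0" using z by simp
  have q1: "q > 1" using p q by (simp add: less_divide_eq)
  have pq: "1/p + 1/q = 1" unfolding q using p by (simp add: divide_simps)
  define u where "u = (c*a) powr (1/p)"
  define v where "v = z * (c*a) powr (-1/p)"
  have ca: "c*a > 0" using a c by simp
  have "u * v = z" unfolding u_def v_def using ca a c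
    by (simp add: powr_minus_divide divide_simps powr_minus)
  moreover have "u powr p = c*a" unfolding u_def using ca p by (simp add: powr_powr)
  moreover have "v powr q = c powr (-q/p) * (z powr q * a powr (1/(1-p)))"
  proof -
    have "v powr q = z powr q * (c*a) powr (-q/p)" unfolding v_def using ca zp
      by (simp add: powr_mult powr_powr)
    also have "(c*a) powr (-q/p) = c powr (-q/p) * a powr (-q/p)" using a c by (simp add: powr_mult)
    also have "a powr (-q/p) = a powr (1/(1-p))"
    proof -
      have "-q/p = 1/(1-p)" unfolding q using p by (simp add: divide_simps)
      then show ?thesis by simp
    qed
    finally show ?thesis by (simp add: mult_ac)
  qed
  moreover have "u * v \<le> u powr p / p + v powr q / q"
    by (rule Youngs_inequality[OF p q1 pq]) (auto simp: u_def v_def z)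
  ultimately show ?thesis by (simp add: mult.assoc)
qed

lemma opt_c:
  fixes A P B p q :: real
  assumes A: "A \<ge> 0" and P: "P \<ge> 0" and B: "B > 0" and p: "p > 1" and q: "q = p/(p-1)"
    and H: "\<And>c. c > 0 \<Longrightarrow> A \<le> c*P/p + c powr (-q/p) * B / q"
  shows "A powr p \<le> P * B powr (p-1)"
proof (cases "P = 0")
  case True
  have q0: "q > 0" using p q by simp
  have "A = 0"
  proof (rule ccontr)
    assume "A \<noteq> 0" hence Ap: "A > 0" using A by simp
    define c where "c = (A*q/(2*B)) powr (-p/q)"
    have cp: "c > 0" using Ap q0 B by (simp add: c_def)
    have "c powr (-q/p) = A*q/(2*B)" unfolding c_def using Ap q0 B p
      by (simp add: powr_powr)
    hence e: "c powr (-q/p) * B / q = A/2" using B q0 by (simp add: field_simps)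
    have "A \<le> c*P/p + c powr (-q/p) * B / q" by (rule H[OF cp])
    moreover have "c*P/p = 0" using True by simp
    ultimately have "A \<le> A/2" using e by (smt (verit))
    with Ap show False by simp
  qed
  then show ?thesis using P B p by simp
next
  case False
  hence Pp: "P > 0" using P by simp
  have q0: "q > 0" using p q by simp
  have iq: "1/q = 1 - 1/p" unfolding q using p by (simp add: divide_simps)
  define c where "c = (B/P) powr (1/q)"
  have cp: "c > 0" using Pp B by (simp add: c_def)
  define X where "X = P powr (1/p) * B powr (1/q)"
  have PP: "P powr (1/p) * P powr (1/q) = P"
  proof -
    have "P powr (1/p) * P powr (1/q) = P powr (1/p + 1/q)" by (simp add: powr_add)
    also have "1/p + 1/q = 1" using iq by simp
    finally show ?thesis using Pp by simp
  qed
  have BB: "B powr (1/p) * B powr (1/q) = B"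
  proof -
    have "B powr (1/p) * B powr (1/q) = B powr (1/p + 1/q)" by (simp add: powr_add)
    also have "1/p + 1/q = 1" using iq by simp
    finally show ?thesis using B by simp
  qed
  have e1: "c*P = X" unfolding c_def X_def using Pp B iq PP
    by (simp add: powr_divide powr_diff field_simps)
  have e2: "c powr (-q/p) * B = X" unfolding c_def X_def using Pp B iq q0 p BB
    by (simp add: powr_divide powr_powr powr_diff field_simps powr_minus)
  have "A \<le> X/p + X/q" using H[OF cp] e1 e2 by (simp add: mult.assoc)
  also have "\<dots> = X * (1/p + 1/q)" by (simp add: field_simps)
  also have "1/p + 1/q = 1" unfolding q using p by (simp add: divide_simps)
  also have "X * 1 = X" by simp
  finally have AX: "A \<le> X" .
  have "p/q = p - 1" unfolding q using p by (simp add: divide_simps)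
  have "A powr p \<le> X powr p" using A AX p by (simp add: powr_mono2)
  also have "X powr p = P powr (1/p*p) * B powr (1/q*p)" unfolding X_def using Pp B
    by (simp add: powr_mult powr_powr)
  also have "1/p*p = 1" using p by simp
  also have "1/q*p = p - 1" using \<open>p/q = p - 1\<close> by simp
  also have "P powr 1 = P" using Pp by simp
  finally show ?thesis .
qed

lemma sum_young:
  fixes z c p q :: real and a :: "nat \<Rightarrow> real" and j m :: nat
  assumes z: "z \<ge> 0" and c: "c > 0" and p: "p > 1" and q: "q = p/(p-1)" and j: "j < m"
    and a: "\<And>i. i < m \<Longrightarrow> a i > 0"
  shows "(real m - 1) * z \<le> c/p * (\<Sum>i<m. if j \<noteq> i then a i else 0)
          + c powr (-q/p) / q * (z powr q * (\<Sum>i<m. a i powr (1/(1-p))))"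
proof -
  have q0: "q > 0" using p q by simp
  have "(\<Sum>i<m. z) = z + (\<Sum>i\<in>{..<m}-{j}. z)" using j by (subst sum.remove[of _ j]) auto
  moreover have "(\<Sum>i<m. if j \<noteq> i then z else 0) = (\<Sum>i\<in>{..<m}-{j}. z)"
    by (rule sum.mono_neutral_cong_right) auto
  ultimately have "(real m - 1) * z = (\<Sum>i<m. if j \<noteq> i then z else 0)"
    by (simp add: algebra_simps)
  also have "\<dots> \<le> (\<Sum>i<m. c/p * (if j \<noteq> i then a i else 0)
          + c powr (-q/p) / q * (z powr q * a i powr (1/(1-p))))"
  proof (rule sum_mono)
    fix i assume "i \<in> {..<m}"
    hence ai: "a i > 0" using a by simp
    have nn: "0 \<le> c powr (-q/p) / q * (z powr q * a i powr (1/(1-p)))"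
      using q0 by simp
    show "(if j \<noteq> i then z else 0) \<le> c/p * (if j \<noteq> i then a i else 0)
          + c powr (-q/p) / q * (z powr q * a i powr (1/(1-p)))"
    proof (cases "j = i")
      case True thus ?thesis using nn by simp
    next
      case False
      have "z \<le> c*a i/p + c powr (-q/p) * (z powr q * a i powr (1/(1-p))) / q"
        by (rule young_c[OF z ai c p q])
      thus ?thesis using False by simp
    qed
  qed
  also have "\<dots> = c/p * (\<Sum>i<m. if j \<noteq> i then a i else 0)
          + c powr (-q/p) / q * (z powr q * (\<Sum>i<m. a i powr (1/(1-p))))"
    by (simp add: sum.distrib sum_distrib_left)
  finally show ?thesis .
qed

theorem mainTheorem3:
  fixes M :: "'w measure" and X :: "'x measure"
    and x :: "'w \<Rightarrow> 'x" and theta :: "'w \<Rightarrow> nat" and m :: nat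
    and post :: "nat \<Rightarrow> 'x \<Rightarrow> real"
    and detector :: "'x \<Rightarrow> nat" and zeta :: "'x \<Rightarrow> real" and p :: real
  assumes "prob_space M"
    and x_meas: "x \<in> measurable M X"
    and theta_meas: "theta \<in> measurable M (count_space UNIV)"
    and theta_range: "\<And>\<omega>. \<omega> \<in> space M \<Longrightarrow> theta \<omega> < m"
    and post_meas: "\<And>i. i < m \<Longrightarrow> post i \<in> borel_measurable X"
    and post_pos: "\<And>i y. i < m \<Longrightarrow> y \<in> space X \<Longrightarrow> post i y > 0"
    and posterior: "\<And>i A. i < m \<Longrightarrow> A \<in> sets X \<Longrightarrow>
        emeasure M {\<omega> \<in> space M. theta \<omega> = i \<and> x \<omega> \<in> A}
          = (\<integral>\<^sup>+ y \<in> A. ennreal (post i y) \<partial>distr M X x)"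
    and det_meas: "detector \<in> measurable X (count_space UNIV)"
    and det_range: "\<And>y. y \<in> space X \<Longrightarrow> detector y < m"
    and p_gt: "p > 1"
    and zeta_meas: "zeta \<in> borel_measurable X"
    and zeta_nonneg: "\<And>y. y \<in> space X \<Longrightarrow> zeta y \<ge> 0"
    and E1_pos: "0 < (\<integral>\<^sup>+ \<omega>. ennreal (zeta (x \<omega>)) \<partial>M)"
    and E1_fin: "(\<integral>\<^sup>+ \<omega>. ennreal (zeta (x \<omega>)) \<partial>M) < \<infinity>"
    and E2_pos: "0 < (\<integral>\<^sup>+ \<omega>. ennreal (zeta (x \<omega>) powr (p / (p - 1))
                     * (\<Sum>i<m. post i (x \<omega>) powr (1 / (1 - p)))) \<partial>M)"
    and E2_fin: "(\<integral>\<^sup>+ \<omega>. ennreal (zeta (x \<omega>) powr (p / (p - 1))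
                     * (\<Sum>i<m. post i (x \<omega>) powr (1 / (1 - p)))) \<partial>M) < \<infinity>"
  shows "measure M {\<omega> \<in> space M. detector (x \<omega>) \<noteq> theta \<omega>}
    \<ge> (real m - 1) powr p
       * (\<integral>\<omega>. zeta (x \<omega>) \<partial>M) powr p
       * (\<integral>\<omega>. zeta (x \<omega>) powr (p / (p - 1))
              * (\<Sum>i<m. post i (x \<omega>) powr (1 / (1 - p))) \<partial>M) powr (1 - p)"
  proof -
  interpret prob_space M by fact
  define q where "q = p/(p-1)"
  have q0: "q > 0" using p_gt by (simp add: q_def)
  have xsp: "\<And>\<omega>. \<omega> \<in> space M \<Longrightarrow> x \<omega> \<in> space X"
    using x_meas by (simp add: measurable_space)
  have m0: "m > 0" using theta_range[of "SOME \<omega>. \<omega> \<in> space M"] not_empty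
    by (metis gr_zeroI not_less_zero some_in_eq)
  have postx: "\<And>i. i < m \<Longrightarrow> (\<lambda>\<omega>. post i (x \<omega>)) \<in> borel_measurable M"
    using post_meas x_meas by (simp add: measurable_compose)
  have zx: "(\<lambda>\<omega>. zeta (x \<omega>)) \<in> borel_measurable M"
    using zeta_meas x_meas by (simp add: measurable_compose)
  have detx: "(\<lambda>\<omega>. detector (x \<omega>)) \<in> measurable M (count_space UNIV)"
    using det_meas x_meas by (simp add: measurable_compose)
  define f2 where "f2 \<omega> = zeta (x \<omega>) powr (p / (p - 1))
                     * (\<Sum>i<m. post i (x \<omega>) powr (1 / (1 - p)))" for \<omega>
  define g where "g i \<omega> = (if detector (x \<omega>) \<noteq> i then post i (x \<omega>) else 0)" for i \<omega>
  define A where "A i = {y\<in>space X. detector y \<noteq> i}" for i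
  define S where "S i = {\<omega>\<in>space M. theta \<omega> = i \<and> x \<omega> \<in> A i}" for i
  have f2m: "f2 \<in> borel_measurable M"
    unfolding f2_def
    by (intro borel_measurable_times powr_real_measurable borel_measurable_sum zx postx
        borel_measurable_const) auto
  have f2nn: "\<And>\<omega>. f2 \<omega> \<ge> 0" unfolding f2_def by (intro mult_nonneg_nonneg sum_nonneg) auto
  have detset: "\<And>i. {\<omega>\<in>space M. detector (x \<omega>) \<noteq> i} \<in> sets M"
  proof -
    fix i
    have "{\<omega>\<in>space M. detector (x \<omega>) \<noteq> i} = (\<lambda>\<omega>. detector (x \<omega>)) -` (UNIV - {i}) \<inter> space M"
      by auto
    also have "\<dots> \<in> sets M" using detx by (rule measurable_sets) simp
    finally show "{\<omega>\<in>space M. detector (x \<omega>) \<noteq> i} \<in> sets M" .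
  qed
  have Aset: "\<And>i. A i \<in> sets X"
  proof -
    fix i
    have "A i = detector -` (UNIV - {i}) \<inter> space X" unfolding A_def by auto
    also have "\<dots> \<in> sets X" using det_meas by (rule measurable_sets) simp
    finally show "A i \<in> sets X" .
  qed
  have thset: "\<And>i. {\<omega>\<in>space M. theta \<omega> = i} \<in> sets M"
  proof -
    fix i
    have "{\<omega>\<in>space M. theta \<omega> = i} = theta -` {i} \<inter> space M" by auto
    also have "\<dots> \<in> sets M" using theta_meas by (rule measurable_sets) simp
    finally show "{\<omega>\<in>space M. theta \<omega> = i} \<in> sets M" .
  qed
  have Sset: "\<And>i. S i \<in> sets M"
  proof -
    fix i
    have "S i = {\<omega>\<in>space M. theta \<omega> = i} \<inter> (x -` A i \<inter> space M)" unfolding S_def by auto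
    also have "\<dots> \<in> sets M" using thset measurable_sets[OF x_meas Aset] by blast
    finally show "S i \<in> sets M" .
  qed
  have gm: "\<And>i. i < m \<Longrightarrow> g i \<in> borel_measurable M"
    unfolding g_def by (intro measurable_If postx borel_measurable_const detset)
  have gnn: "\<And>i \<omega>. i < m \<Longrightarrow> \<omega> \<in> space M \<Longrightarrow> g i \<omega> \<ge> 0"
    unfolding g_def using post_pos xsp by (simp add: less_imp_le)
  have gN: "\<And>i. i < m \<Longrightarrow> (\<integral>\<^sup>+\<omega>. ennreal (g i \<omega>) \<partial>M) = emeasure M (S i)"
  proof -
    fix i assume i: "i < m"
    have "emeasure M (S i) = (\<integral>\<^sup>+ y \<in> A i. ennreal (post i y) \<partial>distr M X x)"
      unfolding S_def by (rule posterior[OF i Aset])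
    also have "\<dots> = (\<integral>\<^sup>+ \<omega>. ennreal (post i (x \<omega>)) * indicator (A i) (x \<omega>) \<partial>M)"
      by (rule nn_integral_distr[OF x_meas])
        (use post_meas[OF i] Aset in \<open>auto intro!: borel_measurable_times\<close>)
    also have "\<dots> = (\<integral>\<^sup>+\<omega>. ennreal (g i \<omega>) \<partial>M)"
      by (rule nn_integral_cong) (auto simp: g_def A_def xsp indicator_def)
    finally show "(\<integral>\<^sup>+\<omega>. ennreal (g i \<omega>) \<partial>M) = emeasure M (S i)" ..
  qed
  have gint: "\<And>i. i < m \<Longrightarrow> integrable M (g i)"
    by (rule integrableI_nonneg) (auto simp: gm gnn gN emeasure_finite less_top[symmetric])
  have gI: "\<And>i. i < m \<Longrightarrow> integral\<^sup>L M (g i) = measure M (S i)"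
    by (subst integral_eq_nn_integral) (auto simp: gm gnn gN measure_def)
  define Pe where "Pe = measure M {\<omega> \<in> space M. detector (x \<omega>) \<noteq> theta \<omega>}"
  have Sunion: "{\<omega> \<in> space M. detector (x \<omega>) \<noteq> theta \<omega>} = (\<Union>i\<in>{..<m}. S i)"
    unfolding S_def A_def using theta_range xsp by auto
  have Pe_eq: "Pe = (\<Sum>i<m. measure M (S i))"
    unfolding Pe_def Sunion
  proof (rule measure_finite_Union)
    show "S ` {..<m} \<subseteq> sets M" using Sset by auto
    show "disjoint_family_on S {..<m}" unfolding disjoint_family_on_def S_def by auto
  qed (auto simp: emeasure_finite)
  also have "\<dots> = (\<Sum>i<m. integral\<^sup>L M (g i))" using gI by simp
  also have "\<dots> = (\<integral>\<omega>. (\<Sum>i<m. g i \<omega>) \<partial>M)" using gint by (simp add: integral_sum)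
  finally have PeI: "Pe = (\<integral>\<omega>. (\<Sum>i<m. g i \<omega>) \<partial>M)" .
  have Pe_nn: "Pe \<ge> 0" unfolding Pe_def by simp
  have z_int: "integrable M (\<lambda>\<omega>. zeta (x \<omega>))"
    by (rule integrableI_nonneg) (use zx zeta_nonneg xsp E1_fin in auto)
  have f2_int: "integrable M f2"
    by (rule integrableI_nonneg) (use f2m f2nn E2_fin in \<open>auto simp: f2_def\<close>)
  define E1 where "E1 = (\<integral>\<omega>. zeta (x \<omega>) \<partial>M)"
  define E2 where "E2 = (\<integral>\<omega>. f2 \<omega> \<partial>M)"
  have E1_eq: "E1 = enn2real (\<integral>\<^sup>+ \<omega>. ennreal (zeta (x \<omega>)) \<partial>M)"
    unfolding E1_def by (rule integral_eq_nn_integral) (use zx zeta_nonneg xsp in auto)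
  have E2_eq: "E2 = enn2real (\<integral>\<^sup>+ \<omega>. ennreal (f2 \<omega>) \<partial>M)"
    unfolding E2_def by (rule integral_eq_nn_integral) (use f2m f2nn in auto)
  have E1p: "E1 > 0" unfolding E1_eq enn2real_positive_iff using E1_pos E1_fin by simp
  have E2p: "E2 > 0" unfolding E2_eq enn2real_positive_iff using E2_pos E2_fin
    by (simp add: f2_def)
  have Gint: "integrable M (\<lambda>\<omega>. \<Sum>i<m. g i \<omega>)"
    by (rule Bochner_Integration.integrable_sum[where f=g]) (use gint in auto)
  have key: "(real m - 1) * E1 \<le> c * Pe / p + c powr (-q/p) * E2 / q" if c: "c > 0" for c
  proof -
    have "(real m - 1) * E1 = (\<integral>\<omega>. (real m - 1) * zeta (x \<omega>) \<partial>M)"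
      unfolding E1_def by simp
    also have "\<dots> \<le> (\<integral>\<omega>. c/p * (\<Sum>i<m. g i \<omega>) + c powr (-q/p) / q * f2 \<omega> \<partial>M)"
    proof (rule integral_mono)
      show "integrable M (\<lambda>\<omega>. (real m - 1) * zeta (x \<omega>))" using z_int by simp
      show "integrable M (\<lambda>\<omega>. c/p * (\<Sum>i<m. g i \<omega>) + c powr (-q/p) / q * f2 \<omega>)"
        by (rule Bochner_Integration.integrable_add[OF integrable_mult_right[OF Gint] integrable_mult_right[OF f2_int]])
      fix \<omega> assume w: "\<omega> \<in> space M"
      have "(real m - 1) * zeta (x \<omega>) \<le> c/p * (\<Sum>i<m. if detector (x \<omega>) \<noteq> i then post i (x \<omega>) else 0)
          + c powr (-q/p) / q * (zeta (x \<omega>) powr q * (\<Sum>i<m. post i (x \<omega>) powr (1/(1-p))))"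
        by (rule sum_young[OF zeta_nonneg[OF xsp[OF w]] c p_gt q_def det_range[OF xsp[OF w]]])
          (use post_pos xsp[OF w] in auto)
      thus "(real m - 1) * zeta (x \<omega>) \<le> c/p * (\<Sum>i<m. g i \<omega>) + c powr (-q/p) / q * f2 \<omega>"
        by (simp add: g_def f2_def q_def)
    qed
    also have "\<dots> = c/p * Pe + c powr (-q/p) / q * E2"
      unfolding PeI E2_def
      by (rule trans[OF Bochner_Integration.integral_add[OF integrable_mult_right[OF Gint] integrable_mult_right[OF f2_int]]])
        (simp only: integral_mult_right_zero)
    finally show ?thesis by simp
  qed
  have mp: "real m - 1 \<ge> 0" using m0 by simp
  have main: "((real m - 1) * E1) powr p \<le> Pe * E2 powr (p - 1)"
    by (rule opt_c[OF _ Pe_nn E2p p_gt q_def key]) (use mp E1p in auto)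
  have "(real m - 1) powr p * E1 powr p * E2 powr (1 - p)
        = ((real m - 1) * E1) powr p * E2 powr (1 - p)"
    using mp E1p by (simp add: powr_mult)
  also have "\<dots> \<le> Pe * E2 powr (p - 1) * E2 powr (1 - p)"
    using main by (simp add: mult_right_mono)
  also have "\<dots> = Pe"
    using E2p by (simp add: mult.assoc powr_add[symmetric])
  finally show ?thesis unfolding Pe_def E1_def E2_def f2_def .
qed

end
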